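(* Fix $r\in(0,\pi/2)$ and let $s(\ell)=\sin^3\ell$, $s^{(-1)}$ its primitive vanishing at $0$ and $s^{(-2)}$ the primitive of $s^{(-1)}$ vanishing at $0$. Define, for $\ell\in[0,\pi)$ and $\alpha,\beta\in[0,\pi/2)$, \[g(\ell,\alpha,\beta) =\frac43 \ell - \frac{s(\ell)}{9\tan^2r \cos\alpha\cos\beta} -\frac{s^{(-1)}(\ell)}{3\tan r}\left(\frac1{\cos\alpha}+\frac1{\cos\beta}\right)-s^{(-2)}(\ell),\] and $f(\alpha,\beta)=\sup_\ell g(\ell,\alpha,\beta)$. Then: (1) for each fixed $\alpha$, the maximum of $\ell\mapsto g(\ell,\alpha,\alpha)$ is attained at $\ell=2\arctan(\tan r\cos\alpha)$ and only there; (2) for all $\alpha,\beta$, $f(\alpha,\beta)\le \frac12\left(f(\alpha,\alpha)+f(\beta,\beta)\right)$, with equality only for $\alpha=\beta$. *)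

theory Defs
  imports "HOL-Analysis.Analysis"
begin

definition s :: "real \<Rightarrow> real" where
  "s l = (sin l) ^ 3"

definition s1 :: "real \<Rightarrow> real" where
  "s1 l = integral {0..l} s"

definition s2 :: "real \<Rightarrow> real" where
  "s2 l = integral {0..l} s1"

definition g :: "real \<Rightarrow> real \<Rightarrow> real \<Rightarrow> real \<Rightarrow> real" where
  "g r l a b = 4/3 * l - s l / (9 * (tan r)^2 * cos a * cos b)
      - s1 l / (3 * tan r) * (1 / cos a + 1 / cos b) - s2 l"

definition f :: "real \<Rightarrow> real \<Rightarrow> real \<Rightarrow> real" where
  "f r a b = (SUP l\<in>{0..<pi}. g r l a b)"

end

theory Submission
  imports Defs
begin


definition S1 :: "real \<Rightarrow> real" where "S1 l = 2/3 - cos l + (cos l)^3/3"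
definition S2 :: "real \<Rightarrow> real" where "S2 l = 2/3 * l - 2/3 * sin l - (sin l)^3 / 9"

lemma S1_deriv: "(S1 has_real_derivative s l) (at l within A)"
proof -
  have "(S1 has_real_derivative (sin l - 3*(cos l)^2 * sin l / 3)) (at l within A)"
    unfolding S1_def by (auto intro!: derivative_eq_intros)
  moreover have "sin l - 3*(cos l)^2 * sin l / 3 = s l"
    unfolding s_def using sin_cos_squared_add[of l] by algebra
  ultimately show ?thesis by simp
qed

lemma S2_deriv: "(S2 has_real_derivative S1 l) (at l within A)"
proof -
  have "(S2 has_real_derivative (2/3 - 2/3*cos l - 3*(sin l)^2 * cos l / 9)) (at l within A)"
    unfolding S2_def by (auto intro!: derivative_eq_intros)
  moreover have "2/3 - 2/3*cos l - 3*(sin l)^2 * cos l / 9 = S1 l"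
    unfolding S1_def using sin_cos_squared_add[of l] by algebra
  ultimately show ?thesis by simp
qed

lemma s1_eq: assumes "0 \<le> l" shows "s1 l = S1 l"
proof -
  have "(s has_integral (S1 l - S1 0)) {0..l}"
    by (rule fundamental_theorem_of_calculus[OF assms])
       (simp add: has_real_derivative_iff_has_vector_derivative[symmetric] S1_deriv)
  then show ?thesis unfolding s1_def by (simp add: integral_unique S1_def)
qed

lemma s2_eq: assumes "0 \<le> l" shows "s2 l = S2 l"
proof -
  have "(S1 has_integral (S2 l - S2 0)) {0..l}"
    by (rule fundamental_theorem_of_calculus[OF assms])
       (simp add: has_real_derivative_iff_has_vector_derivative[symmetric] S2_deriv)
  then have "(s1 has_integral (S2 l - S2 0)) {0..l}"
    by (subst has_integral_cong[where g=S1]) (auto simp: s1_eq)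
  then show ?thesis unfolding s2_def by (simp add: integral_unique S2_def)
qed

definition G :: "real \<Rightarrow> real \<Rightarrow> real \<Rightarrow> real" where
  "G l x y = 4/3 * l - S2 l - (sin l)^3 * x * y / 9 - S1 l * (x + y) / 3"

definition chi :: "real \<Rightarrow> real" where "chi z = 3 * pi / 2 - 3 * arctan z + z / (1 + z^2)"
definition chi1 :: "real \<Rightarrow> real" where "chi1 z = - (2 + 4 * z^2) / (1 + z^2)^2"
definition chi2 :: "real \<Rightarrow> real" where "chi2 z = 8 * z^3 / (1 + z^2)^3"
definition chi3 :: "real \<Rightarrow> real" where "chi3 z = 24 * z^2 * (1 - z^2) / (1 + z^2)^4"
definition Q :: "real \<Rightarrow> real \<Rightarrow> real \<Rightarrow> real" where
  "Q w x y = chi w + chi1 w * (x + y - 2 * w) / 2 - chi2 w * (x - w) * (y - w) / 4"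

lemma g_eq:
  assumes "0 \<le> l" "tan r > 0" "cos a > 0" "cos b > 0"
  shows "g r l a b = G l (1 / (tan r * cos a)) (1 / (tan r * cos b))"
  using assms unfolding g_def G_def s_def
  by (simp add: s1_eq s2_eq field_simps power2_eq_square)

lemma sqrt_sq1: "sqrt (1 + w^2) * sqrt (1 + w^2) = 1 + (w::real)^2"
  by (metis abs_of_nonneg add_nonneg_nonneg real_sqrt_mult_self zero_le_one zero_le_power2)

lemma sin_pi_arctan: "sin (pi - 2 * arctan w) = 2 * w / (1 + w^2)"
proof -
  have "sin (2 * arctan w) = 2 * sin (arctan w) * cos (arctan w)" by (rule sin_double)
  also have "\<dots> = 2 * w / (1 + w^2)" by (simp add: sin_arctan cos_arctan sqrt_sq1)
  finally show ?thesis by simp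
qed

lemma cos_pi_arctan: "cos (pi - 2 * arctan w) = (w^2 - 1) / (1 + w^2)"
proof -
  have p: "1 + w^2 > 0" by (simp add: add_pos_nonneg)
  have "cos (2 * arctan w) = (cos (arctan w))^2 - (sin (arctan w))^2" by (rule cos_double)
  also have "\<dots> = (1 - w^2) / (1 + w^2)"
    using p by (simp add: sin_arctan cos_arctan power_divide field_simps)
  finally show ?thesis using p by (simp add: field_simps)
qed

lemma G_Q: "G (pi - 2 * arctan w) x y = 4/9 * Q w x y"
proof -
  define iD where "iD = 1 / (1 + w^2)"
  have d: "1 + w^2 > 0" by (simp add: add_pos_nonneg)
  have e: "iD * (1 + w^2) = 1" unfolding iD_def using d by simp
  have sn: "sin (pi - 2 * arctan w) = 2 * w * iD" unfolding sin_pi_arctan iD_def by simp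
  have cs: "cos (pi - 2 * arctan w) = (w^2 - 1) * iD" unfolding cos_pi_arctan iD_def by simp
  have c0: "chi w = 3 * pi / 2 - 3 * arctan w + w * iD" unfolding chi_def iD_def by simp
  have c1: "chi1 w = - (2 + 4 * w^2) * iD^2" unfolding chi1_def iD_def by (simp add: power_divide)
  have c2: "chi2 w = 8 * w^3 * iD^3" unfolding chi2_def iD_def by (simp add: power_divide)
  have "G (pi - 2 * arctan w) x y - 4/9 * Q w x y =
     2/3 * (2 * w * iD) + (2 * w * iD)^3 / 9 - (2 * w * iD)^3 * x * y / 9
     - (2/3 - (w^2 - 1) * iD + ((w^2 - 1) * iD)^3 / 3) * (x + y) / 3
     - 4/9 * (w * iD + (- (2 + 4 * w^2) * iD^2) * (x + y - 2 * w) / 2 - 8 * w^3 * iD^3 * (x - w) * (y - w) / 4)"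
    unfolding G_def S1_def S2_def Q_def c0 c1 c2 sn cs
    by (simp add: algebra_simps) (simp add: field_simps)
  also have "\<dots> = (-2/9*x - 2/9*y) + (1/3*w^2*x + 1/3*w^2*y + 8/9*w - 1/3*x - 1/3*y)*iD + (-16/9*w^3 + 8/9*w^2*x + 8/9*w^2*y - 8/9*w + 4/9*x + 4/9*y)*iD^2 + (-1/9*w^6*x - 1/9*w^6*y + 8/9*w^5 - 5/9*w^4*x - 5/9*w^4*y + 8/9*w^3 - 1/3*w^2*x - 1/3*w^2*y + 1/9*x + 1/9*y)*iD^3"
    by (simp add: field_simps eval_nat_numeral)
  also have "\<dots> = (-2/9*x - 2/9*y)*(iD*(1+w^2))^3 + (1/3*w^2*x + 1/3*w^2*y + 8/9*w - 1/3*x - 1/3*y)*iD*(iD*(1+w^2))^2 + (-16/9*w^3 + 8/9*w^2*x + 8/9*w^2*y - 8/9*w + 4/9*x + 4/9*y)*iD^2*(iD*(1+w^2)) + (-1/9*w^6*x - 1/9*w^6*y + 8/9*w^5 - 5/9*w^4*x - 5/9*w^4*y + 8/9*w^3 - 1/3*w^2*x - 1/3*w^2*y + 1/9*x + 1/9*y)*iD^3"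
    using e by simp
  also have "\<dots> = iD^3 * ((-2/9*x - 2/9*y)*(1+w^2)^3 + (1/3*w^2*x + 1/3*w^2*y + 8/9*w - 1/3*x - 1/3*y)*(1+w^2)^2 + (-16/9*w^3 + 8/9*w^2*x + 8/9*w^2*y - 8/9*w + 4/9*x + 4/9*y)*(1+w^2) + (-1/9*w^6*x - 1/9*w^6*y + 8/9*w^5 - 5/9*w^4*x - 5/9*w^4*y + 8/9*w^3 - 1/3*w^2*x - 1/3*w^2*y + 1/9*x + 1/9*y))"
    by (simp add: field_simps eval_nat_numeral)
  also have "\<dots> = 0"
    by (simp add: field_simps eval_nat_numeral)
  finally show ?thesis by simp
qed



lemma pos1: "1 + (z::real)^2 > 0" by (simp add: add_pos_nonneg)

lemma chi1_alt: "chi1 z = - 3 / (1 + z^2) + (1 - z^2) / ((1 + z^2) * (1 + z^2))"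
proof -
  define D where "D = 1 + z^2"
  have Dp: "D \<noteq> 0" using pos1[of z] unfolding D_def by simp
  have "- (2 + 4 * z^2) / D^2 = - 3 / D + (1 - z^2) / (D * D)"
    using Dp apply (simp add: field_simps) apply (simp add: D_def algebra_simps power2_eq_square)
    done
  then show ?thesis unfolding chi1_def D_def by simp
qed

lemma chi_deriv: "DERIV chi z :> chi1 z"
  unfolding chi_def
  apply (rule derivative_eq_intros refl)+
  using pos1[of z] apply (simp add: power2_eq_square)
  apply (rule refl)
  apply (simp add: chi1_alt divide_inverse power2_eq_square)
  done

lemma chi1_deriv: "DERIV chi1 z :> chi2 z"
proof -
  have "DERIV chi1 z :> (- (4 * (2 * z)) * (1 + z^2)^2 - (- (2 + 4 * z^2)) * (2 * (1 + z^2) * (2 * z))) / ((1 + z^2)^2)^2"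
    unfolding chi1_def using pos1[of z]
    by (auto intro!: derivative_eq_intros simp: power2_eq_square)
  moreover have "(- (4 * (2 * z)) * (1 + z^2)^2 - (- (2 + 4 * z^2)) * (2 * (1 + z^2) * (2 * z))) / ((1 + z^2)^2)^2 = chi2 z"
    unfolding chi2_def using pos1[of z]
    apply (subst frac_eq_eq) apply simp apply simp
    apply (simp add: algebra_simps eval_nat_numeral)
    done
  ultimately show ?thesis by simp
qed

lemma chi2_deriv: "DERIV chi2 z :> chi3 z"
proof -
  have "DERIV chi2 z :> (8 * (3 * z^2) * (1 + z^2)^3 - 8 * z^3 * (3 * (1 + z^2)^2 * (2 * z))) / ((1 + z^2)^3)^2"
    unfolding chi2_def using pos1[of z]
    by (auto intro!: derivative_eq_intros simp: power2_eq_square)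
  moreover have "(8 * (3 * z^2) * (1 + z^2)^3 - 8 * z^3 * (3 * (1 + z^2)^2 * (2 * z))) / ((1 + z^2)^3)^2 = chi3 z"
    unfolding chi3_def using pos1[of z]
    apply (subst frac_eq_eq) apply simp apply simp
    apply (simp add: algebra_simps eval_nat_numeral)
    done
  ultimately show ?thesis by simp
qed

lemma chi1_diff: "chi1 p - chi1 q = 2 * (p^2 - q^2) * (p^2 + q^2 + 2 * p^2 * q^2) / ((1 + p^2)^2 * (1 + q^2)^2)"
proof -
  define P where "P = 1 + p^2"
  define R where "R = 1 + q^2"
  have Pp: "P \<noteq> 0" using pos1[of p] unfolding P_def by simp
  have Rp: "R \<noteq> 0" using pos1[of q] unfolding R_def by simp
  have "- (2 + 4 * p^2) / P^2 - - (2 + 4 * q^2) / R^2 = 2 * (p^2 - q^2) * (p^2 + q^2 + 2 * p^2 * q^2) / (P^2 * R^2)"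
    using Pp Rp apply (simp add: field_simps) apply (simp add: P_def R_def algebra_simps eval_nat_numeral)
    done
  then show ?thesis unfolding chi1_def P_def R_def .
qed

lemma chi1_mono: assumes "0 \<le> q" "q < p" shows "chi1 q < chi1 p"
proof -
  have "p^2 - q^2 > 0" using assms by (simp add: power_strict_mono)
  moreover have "p^2 + q^2 + 2 * p^2 * q^2 > 0" using assms by (simp add: add_pos_nonneg)
  ultimately have "chi1 p - chi1 q > 0" unfolding chi1_diff using pos1[of p] pos1[of q]
    by (simp add: zero_less_divide_iff)
  then show ?thesis by simp
qed

lemma bregman: assumes "0 \<le> w" "0 \<le> z" "z \<noteq> w" shows "chi z - chi w - chi1 w * (z - w) > 0"
proof (cases "w < z")
  case True
  obtain c where c: "w < c" "c < z" "chi z - chi w = (z - w) * chi1 c"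
    using MVT2[OF True chi_deriv] by blast
  have "chi1 w < chi1 c" using chi1_mono c assms by simp
  then have "(z - w) * chi1 w < (z - w) * chi1 c" using True by (intro mult_strict_left_mono) auto
  then show ?thesis using c by (simp add: algebra_simps)
next
  case False
  then have zw: "z < w" using assms by simp
  obtain c where c: "z < c" "c < w" "chi w - chi z = (w - z) * chi1 c"
    using MVT2[OF zw chi_deriv] by blast
  have "chi1 c < chi1 w" using chi1_mono c assms by simp
  then have "(w - z) * chi1 c < (w - z) * chi1 w" using zw by (intro mult_strict_left_mono) auto
  then show ?thesis using c by (simp add: algebra_simps)
qed

lemma bregman0: assumes "0 \<le> w" "0 \<le> z" shows "chi z - chi w - chi1 w * (z - w) \<ge> 0"
  using bregman[OF assms] by (cases "z = w") auto

lemma chi_pos: "chi z > 0" if "0 \<le> z"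
proof -
  have "arctan z < pi / 2" by (rule arctan_ubound)
  moreover have "z / (1 + z^2) \<ge> 0" using that pos1[of z] by simp
  ultimately show ?thesis unfolding chi_def by linarith
qed

lemma chi2_nonneg: "0 \<le> w \<Longrightarrow> chi2 w \<ge> 0" unfolding chi2_def using pos1[of w] by simp
lemma chi2_pos: "0 < w \<Longrightarrow> chi2 w > 0" unfolding chi2_def using pos1[of w] by simp

lemma Q_diag: "Q z z z = chi z" unfolding Q_def by simp

lemma part1_ineq:
  assumes "0 < x" "0 < w" "w \<noteq> x" shows "Q w x x < chi x"
proof -
  have "chi x - Q w x x = (chi x - chi w - chi1 w * (x - w)) + chi2 w * (x - w)^2 / 4"
    unfolding Q_def by (simp add: field_simps power2_eq_square)
  moreover have "chi x - chi w - chi1 w * (x - w) > 0" using bregman assms by simp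
  moreover have "chi2 w * (x - w)^2 / 4 \<ge> 0" using chi2_nonneg assms by simp
  ultimately show ?thesis by linarith
qed



definition bb :: "real \<Rightarrow> real \<Rightarrow> real" where
  "bb w t = w * (1 + w^2) * t / (w * (1 + w^2) + (1 - w^2) * t)"

definition Hf :: "real \<Rightarrow> real \<Rightarrow> real \<Rightarrow> real" where
  "Hf x y w = chi x + chi y - 2 * Q w x y"

lemma D0_pos: fixes w t :: real assumes "0 < w" "0 \<le> t" "t < w" shows "w * (1 + w^2) + (1 - w^2) * t > 0"
proof -
  have h: "w^2 * t \<le> w^2 * w" using assms by (intro mult_left_mono) auto
  have eq: "w * (1 + w^2) + (1 - w^2) * t = w + t + (w^2 * w - w^2 * t)"
    by (simp add: algebra_simps)
  show ?thesis unfolding eq using h assms by linarith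
qed

lemma B1_pos:
  assumes "0 < w" "0 < t" "t < w"
  shows "chi1 w - chi1 (w - t) - chi2 w / 2 * bb w t > 0"
proof -
  define x where "x = w - t"
  define W1 where "W1 = 1 + w^2"
  define X1 where "X1 = 1 + x^2"
  define D0 where "D0 = w * (1 + w^2) + (1 - w^2) * t"
  define b1r where "b1r = 2 * x * (t^3 + 2 * w * (w - t) * (w + t)) + 4 * w^3 * x^3"
  have xp: "x > 0" using assms unfolding x_def by simp
  have W1p: "W1 > 0" unfolding W1_def by (rule pos1)
  have X1p: "X1 > 0" unfolding X1_def by (rule pos1)
  have D0p: "D0 > 0" unfolding D0_def using D0_pos[of w t] assms by simp
  have b1p: "b1r > 0"
  proof -
    have "t^3 + 2 * w * (w - t) * (w + t) > 0" using assms by (simp add: add_pos_pos)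
    then show ?thesis unfolding b1r_def using xp assms by (simp add: add_pos_pos)
  qed
  have e1: "chi1 w = - (2 + 4 * w^2) / W1^2" unfolding chi1_def W1_def ..
  have e2: "chi1 (w - t) = - (2 + 4 * x^2) / X1^2" unfolding chi1_def X1_def x_def ..
  have e3: "chi2 w = 8 * w^3 / W1^3" unfolding chi2_def W1_def ..
  have e4: "bb w t = w * W1 * t / D0" unfolding bb_def W1_def D0_def ..
  have poly: "(- (2 + 4 * w^2) * X1^2 + (2 + 4 * x^2) * W1^2) * D0 - 4 * w^4 * t * X1^2 = t * b1r * W1"
    unfolding W1_def X1_def D0_def b1r_def x_def by algebra
  have "chi1 w - chi1 (w - t) - chi2 w / 2 * bb w t
     = ((- (2 + 4 * w^2) * X1^2 + (2 + 4 * x^2) * W1^2) * D0 - 4 * w^4 * t * X1^2) / (W1^2 * X1^2 * D0)"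
    unfolding e1 e2 e3 e4 using W1p X1p D0p
    by (simp add: field_simps eval_nat_numeral)
  also have "\<dots> = t * b1r / (W1 * X1^2 * D0)"
    unfolding poly using W1p by (simp add: field_simps power2_eq_square)
  finally have "chi1 w - chi1 (w - t) - chi2 w / 2 * bb w t = t * b1r / (W1 * X1^2 * D0)" .
  moreover have "t * b1r / (W1 * X1^2 * D0) > 0" using assms b1p W1p X1p D0p by simp
  ultimately show ?thesis by simp
qed

lemma B2_pos:
  assumes "0 < w" "0 < t" "t < w"
  shows "chi1 (w + bb w t) - chi1 w - chi2 w / 2 * t > 0"
proof -
  define W1 where "W1 = 1 + w^2"
  define D0 where "D0 = w * (1 + w^2) + (1 - w^2) * t"
  define E where "E = w + w^3 + 2 * t"
  define Yr where "Yr = t^2 + 2 * t * w + w^4 + w^2"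
  define b2r where "b2r = 4 * w^6 * (w - t) + 2 * w^2 * (4 * w^3 + 4 * t * w * (w - t) - t^3)
     + (4 * w^3 + 12 * t * w^2 + 8 * t^2 * w - 2 * t^3)"
  define y where "y = w + bb w t"
  have W1p: "W1 > 0" unfolding W1_def by (rule pos1)
  have D0p: "D0 > 0" unfolding D0_def using D0_pos[of w t] assms by simp
  have Ep: "E > 0" unfolding E_def using assms by (simp add: add_pos_pos)
  have Yrp: "Yr > 0" unfolding Yr_def using assms by (simp add: add_pos_pos)
  have tw: "t^3 < w^3" using assms by (simp add: power_strict_mono)
  have tw2: "t^3 \<le> 4 * t^2 * w"
  proof -
    have "t^3 = t^2 * t" by (simp add: power3_eq_cube power2_eq_square)
    also have "\<dots> \<le> t^2 * (4 * w)" using assms by (intro mult_left_mono) auto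
    finally show ?thesis by simp
  qed
  have b2p: "b2r > 0"
  proof -
    have "4 * w^6 * (w - t) \<ge> 0" using assms by simp
    moreover have "4 * w^3 + 4 * t * w * (w - t) - t^3 > 0"
    proof -
      have "4 * t * w * (w - t) \<ge> 0" using assms by simp
      moreover have "w^3 > 0" using assms by simp
      ultimately show ?thesis using tw by linarith
    qed
    moreover have "4 * w^3 + 12 * t * w^2 + 8 * t^2 * w - 2 * t^3 > 0"
    proof -
      have "w^3 > 0" "12 * t * w^2 > 0" using assms by simp_all
      then show ?thesis using tw2 by linarith
    qed
    ultimately show ?thesis unfolding b2r_def using assms by (simp add: add_pos_nonneg add_nonneg_pos)
  qed
  have yD: "y = w * E / D0"
    unfolding y_def bb_def E_def D0_def[symmetric] using D0p
    by (simp add: field_simps D0_def power2_eq_square power3_eq_cube)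
  have y1: "1 + y^2 = W1^2 * Yr / D0^2"
  proof -
    have "D0^2 + w^2 * E^2 = W1^2 * Yr" unfolding D0_def E_def W1_def Yr_def by algebra
    then show ?thesis unfolding yD using D0p by (simp add: field_simps power_mult_distrib)
  qed
  have e1: "chi1 y = - (2 * D0^2 + 4 * w^2 * E^2) * D0^2 / (W1^4 * Yr^2)"
  proof -
    have "chi1 y = - (2 + 4 * y^2) / (1 + y^2)^2" unfolding chi1_def ..
    also have "\<dots> = - (2 + 4 * (w^2 * E^2 / D0^2)) / (W1^2 * Yr / D0^2)^2"
      unfolding y1 unfolding yD by (simp add: power_divide power_mult_distrib)
    also have "\<dots> = - (2 * D0^2 + 4 * w^2 * E^2) * D0^2 / (W1^4 * Yr^2)"
      using D0p W1p Yrp by (simp add: field_simps eval_nat_numeral)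
    finally show ?thesis .
  qed
  have e2: "chi1 w = - (2 + 4 * w^2) / W1^2" unfolding chi1_def W1_def ..
  have e3: "chi2 w = 8 * w^3 / W1^3" unfolding chi2_def W1_def ..
  have poly: "- (2 * D0^2 + 4 * w^2 * E^2) * D0^2 + (2 + 4 * w^2) * W1^2 * Yr^2 - 4 * w^3 * t * W1 * Yr^2
     = t * w^3 * E * b2r"
    unfolding D0_def E_def W1_def Yr_def b2r_def by algebra
  have "chi1 y - chi1 w - chi2 w / 2 * t
     = (- (2 * D0^2 + 4 * w^2 * E^2) * D0^2 + (2 + 4 * w^2) * W1^2 * Yr^2 - 4 * w^3 * t * W1 * Yr^2) / (W1^4 * Yr^2)"
    unfolding e1 e2 e3 using W1p Yrp by (simp add: field_simps eval_nat_numeral)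
  also have "\<dots> = t * w^3 * E * b2r / (W1^4 * Yr^2)" unfolding poly ..
  also have "\<dots> > 0" using assms Ep b2p W1p Yrp by simp
  finally show ?thesis unfolding y_def .
qed

lemma bb_deriv:
  fixes w t :: real assumes "0 < w" "0 \<le> t" "t < w"
  shows "(bb w has_real_derivative (w * (1 + w^2))^2 / (w * (1 + w^2) + (1 - w^2) * t)^2) (at t)"
proof -
  define c where "c = w * (1 + w^2)"
  define k where "k = 1 - w^2"
  have D: "c + k * t \<noteq> 0" using D0_pos[of w t] assms unfolding c_def k_def by simp
  have bbe: "bb w = (\<lambda>t. c * t / (c + k * t))" unfolding bb_def c_def k_def by auto
  have "DERIV (\<lambda>t. c * t / (c + k * t)) t :> (c * 1 * (c + k * t) - c * t * (0 + k * 1)) / ((c + k * t) * (c + k * t))"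
    by (rule DERIV_divide[OF DERIV_cmult[OF DERIV_ident] DERIV_add[OF DERIV_const DERIV_cmult[OF DERIV_ident]] D])
  then show ?thesis unfolding bbe c_def[symmetric] k_def[symmetric]
    by (rule DERIV_cong) (simp add: algebra_simps power2_eq_square)
qed

definition Vf :: "real \<Rightarrow> real \<Rightarrow> real" where
  "Vf w t = chi (w - t) + chi (w + bb w t) - (2 * chi w + chi1 w * (bb w t - t) + chi2 w * t * bb w t / 2)"

lemma Vf_Hf: "Vf w t = Hf (w - t) (w + bb w t) w"
  unfolding Vf_def Hf_def Q_def by (simp add: field_simps)

lemma Vf_deriv:
  fixes w t :: real assumes "0 < w" "0 \<le> t" "t < w"
  shows "DERIV (Vf w) t :> (chi1 w - chi1 (w - t) - chi2 w / 2 * bb w t)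
     + (w * (1 + w^2))^2 / (w * (1 + w^2) + (1 - w^2) * t)^2 * (chi1 (w + bb w t) - chi1 w - chi2 w / 2 * t)"
proof -
  define bd where "bd = (w * (1 + w^2))^2 / (w * (1 + w^2) + (1 - w^2) * t)^2"
  have dbb: "DERIV (bb w) t :> bd" unfolding bd_def using bb_deriv assms .
  have da: "DERIV (\<lambda>t. chi (w - t)) t :> chi1 (w - t) * (0 - 1)"
    by (rule DERIV_chain2[OF chi_deriv DERIV_diff[OF DERIV_const DERIV_ident]])
  have db: "DERIV (\<lambda>t. chi (w + bb w t)) t :> chi1 (w + bb w t) * (0 + bd)"
    by (rule DERIV_chain2[OF chi_deriv DERIV_add[OF DERIV_const dbb]])
  have dc0: "DERIV (\<lambda>t. bb w t - t) t :> bd - 1"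
    by (rule DERIV_diff[OF dbb DERIV_ident])
  have dc1: "DERIV (\<lambda>t. t * bb w t) t :> 1 * bb w t + bd * t"
    by (rule DERIV_mult[OF DERIV_ident dbb])
  have dc: "DERIV (\<lambda>t. 2 * chi w + chi1 w * (bb w t - t) + chi2 w * t * bb w t / 2) t
      :> 0 + chi1 w * (bd - 1) + chi2 w * (1 * bb w t + bd * t) / 2"
  proof -
    have e: "(\<lambda>t. 2 * chi w + chi1 w * (bb w t - t) + chi2 w * t * bb w t / 2)
       = (\<lambda>t. 2 * chi w + chi1 w * (bb w t - t) + (chi2 w / 2) * (t * bb w t))" by (auto simp: algebra_simps)
    show ?thesis unfolding e
      by (rule DERIV_cong[OF DERIV_add[OF DERIV_add[OF DERIV_const DERIV_cmult[OF dc0]] DERIV_cmult[OF dc1]]])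
         (simp add: algebra_simps)
  qed
  have "DERIV (Vf w) t :> chi1 (w - t) * (0 - 1) + chi1 (w + bb w t) * (0 + bd)
     - (0 + chi1 w * (bd - 1) + chi2 w * (1 * bb w t + bd * t) / 2)"
    unfolding Vf_def by (rule DERIV_diff[OF DERIV_add[OF da db] dc])
  then show ?thesis unfolding bd_def[symmetric]
    by (rule DERIV_cong) (simp add: algebra_simps)
qed

lemma V_pos:
  fixes w u :: real assumes "0 < w" "0 < u" "u < w"
  shows "Hf (w - u) (w + bb w u) w > 0"
proof -
  have V0: "Vf w 0 = 0" unfolding Vf_def bb_def by simp
  have "Vf w 0 < Vf w u"
  proof (rule DERIV_pos_imp_increasing_open[OF assms(2)])
    fix x assume x: "0 < x" "x < u"
    have D: "w * (1 + w^2) + (1 - w^2) * x > 0" using D0_pos[of w x] x assms by simp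
    have p1: "(w * (1 + w^2))^2 / (w * (1 + w^2) + (1 - w^2) * x)^2 > 0" using D assms pos1[of w] by simp
    have p2: "chi1 w - chi1 (w - x) - chi2 w / 2 * bb w x > 0" using B1_pos[of w x] x assms by simp
    have p3: "chi1 (w + bb w x) - chi1 w - chi2 w / 2 * x > 0" using B2_pos[of w x] x assms by simp
    have dv: "DERIV (Vf w) x :> (chi1 w - chi1 (w - x) - chi2 w / 2 * bb w x)
     + (w * (1 + w^2))^2 / (w * (1 + w^2) + (1 - w^2) * x)^2 * (chi1 (w + bb w x) - chi1 w - chi2 w / 2 * x)"
      using Vf_deriv[of w x] x assms by simp
    have "(chi1 w - chi1 (w - x) - chi2 w / 2 * bb w x)
     + (w * (1 + w^2))^2 / (w * (1 + w^2) + (1 - w^2) * x)^2 * (chi1 (w + bb w x) - chi1 w - chi2 w / 2 * x) > 0"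
      using p1 p2 p3 by (intro add_pos_pos mult_pos_pos)
    then show "\<exists>y. DERIV (Vf w) x :> y \<and> 0 < y" using dv by blast
  next
    show "continuous_on {0..u} (Vf w)"
    proof (intro continuous_at_imp_continuous_on ballI)
      fix x assume "x \<in> {0..u}"
      then show "isCont (Vf w) x" using Vf_deriv[of w x] assms by (intro DERIV_isCont) auto
    qed
  qed
  then show ?thesis using V0 Vf_Hf[of w u] by simp
qed



definition Sq :: "real \<Rightarrow> real \<Rightarrow> real \<Rightarrow> real" where
  "Sq x y v = (1 - v^2) * (x - v) * (y - v) - v * (1 + v^2) * (x + y - 2 * v)"

lemma Hf_deriv: "DERIV (\<lambda>v. Hf x y v) v :> 12 * v^2 / (1 + v^2)^4 * Sq x y v"
proof -
  have e: "(\<lambda>v. Hf x y v) = (\<lambda>v. (chi x + chi y) - 2 * chi v - chi1 v * (x + y - 2 * v) + (1/2) * (chi2 v * ((x - v) * (y - v))))"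
    unfolding Hf_def Q_def by (auto simp: field_simps)
  have d1: "DERIV (\<lambda>v. chi1 v * (x + y - 2 * v)) v :> chi2 v * (x + y - 2 * v) + (0 - 2 * 1) * chi1 v"
    by (rule DERIV_mult[OF chi1_deriv DERIV_diff[OF DERIV_const DERIV_cmult[OF DERIV_ident]]])
  have d2: "DERIV (\<lambda>v. (x - v) * (y - v)) v :> (0 - 1) * (y - v) + (0 - 1) * (x - v)"
    by (rule DERIV_mult[OF DERIV_diff[OF DERIV_const DERIV_ident] DERIV_diff[OF DERIV_const DERIV_ident]])
  have d3: "DERIV (\<lambda>v. chi2 v * ((x - v) * (y - v))) v :> chi3 v * ((x - v) * (y - v)) + ((0 - 1) * (y - v) + (0 - 1) * (x - v)) * chi2 v"
    by (rule DERIV_mult[OF chi2_deriv d2])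
  have d: "DERIV (\<lambda>v. (chi x + chi y) - 2 * chi v - chi1 v * (x + y - 2 * v) + (1/2) * (chi2 v * ((x - v) * (y - v)))) v
     :> 0 - 2 * chi1 v - (chi2 v * (x + y - 2 * v) + (0 - 2 * 1) * chi1 v) + (1/2) * (chi3 v * ((x - v) * (y - v)) + ((0 - 1) * (y - v) + (0 - 1) * (x - v)) * chi2 v)"
    by (rule DERIV_add[OF DERIV_diff[OF DERIV_diff[OF DERIV_const DERIV_cmult[OF chi_deriv]] d1] DERIV_cmult[OF d3]])
  have eq: "0 - 2 * chi1 v - (chi2 v * (x + y - 2 * v) + (0 - 2 * 1) * chi1 v) + (1/2) * (chi3 v * ((x - v) * (y - v)) + ((0 - 1) * (y - v) + (0 - 1) * (x - v)) * chi2 v)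
     = 12 * v^2 / (1 + v^2)^4 * Sq x y v"
  proof -
    define P where "P = 1 + v^2"
    have Pp: "P \<noteq> 0" using pos1[of v] unfolding P_def by simp
    have c2: "chi2 v = 8 * v^3 / P^3" unfolding chi2_def P_def ..
    have c3: "chi3 v = 24 * v^2 * (1 - v^2) / P^4" unfolding chi3_def P_def ..
    have "0 - 2 * chi1 v - (chi2 v * (x + y - 2 * v) + (0 - 2 * 1) * chi1 v) + (1/2) * (chi3 v * ((x - v) * (y - v)) + ((0 - 1) * (y - v) + (0 - 1) * (x - v)) * chi2 v)
       = 12 * v^2 / P^4 * ((1 - v^2) * (x - v) * (y - v) - v * P * (x + y - 2 * v))"
      unfolding c2 c3 using Pp by (simp add: field_simps eval_nat_numeral)
    then show ?thesis unfolding Sq_def P_def by simp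
  qed
  show ?thesis unfolding e using d eq by simp
qed

lemma Hf_sym: "Hf x y w = Hf y x w" unfolding Hf_def Q_def by (simp add: algebra_simps)

lemma Hf_split: "Hf x y w = (chi x - chi w - chi1 w * (x - w)) + (chi y - chi w - chi1 w * (y - w)) + chi2 w / 2 * ((x - w) * (y - w))"
  unfolding Hf_def Q_def by (simp add: field_simps)

lemma H_pos_mid:
  assumes "0 < x" "x < w" "w < y"
  shows "Hf x y w > 0"
proof -
  have xy: "x \<le> y" using assms by simp
  have cont: "continuous_on {x..y} (\<lambda>v. Hf x y v)"
    by (intro continuous_at_imp_continuous_on ballI DERIV_isCont[OF Hf_deriv])
  obtain v0 where v0: "v0 \<in> {x..y}" "\<forall>v\<in>{x..y}. Hf x y v0 \<le> Hf x y v"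
    using continuous_attains_inf[OF compact_Icc _ cont] xy by auto
  have "Hf x y v0 > 0"
  proof -
    consider "v0 = x" | "v0 = y" | "x < v0 \<and> v0 < y" using v0(1) by force
    then show ?thesis
    proof cases
      case 1
      have "Hf x y x = chi y - chi x - chi1 x * (y - x)" unfolding Hf_def Q_def by (simp add: field_simps)
      moreover have "chi y - chi x - chi1 x * (y - x) > 0" using bregman[of x y] assms by simp
      ultimately show ?thesis using 1 by simp
    next
      case 2
      have "Hf x y y = chi x - chi y - chi1 y * (x - y)" unfolding Hf_def Q_def by (simp add: field_simps)
      moreover have "chi x - chi y - chi1 y * (x - y) > 0" using bregman[of y x] assms by simp
      ultimately show ?thesis using 2 by simp
    next
      case 3
      define d where "d = min (v0 - x) (y - v0)"
      have dp: "d > 0" using 3 unfolding d_def by simp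
      have "12 * v0^2 / (1 + v0^2)^4 * Sq x y v0 = 0"
      proof (rule DERIV_local_min[OF Hf_deriv dp], intro allI impI)
        fix z assume "\<bar>v0 - z\<bar> < d"
        then have "z \<in> {x..y}" unfolding d_def by auto
        then show "Hf x y v0 \<le> Hf x y z" using v0 by blast
      qed
      moreover have "12 * v0^2 / (1 + v0^2)^4 \<noteq> 0" using 3 assms pos1[of v0] by simp
      ultimately have S0: "Sq x y v0 = 0" by simp
      define u where "u = v0 - x"
      have u: "0 < u" "u < v0" using 3 assms unfolding u_def by auto
      have D: "v0 * (1 + v0^2) + (1 - v0^2) * u > 0" using D0_pos[of v0 u] u by simp
      have "(y - v0) * (v0 * (1 + v0^2) + (1 - v0^2) * u) = v0 * (1 + v0^2) * u"
        using S0 unfolding Sq_def u_def by (simp add: algebra_simps)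
      then have "y - v0 = bb v0 u" unfolding bb_def using D by (simp add: field_simps)
      then have yy: "y = v0 + bb v0 u" by simp
      have xx: "x = v0 - u" unfolding u_def by simp
      show ?thesis unfolding yy xx using V_pos[of v0 u] u by simp
    qed
  qed
  moreover have "Hf x y v0 \<le> Hf x y w" using v0 assms by simp
  ultimately show ?thesis by simp
qed

lemma Hf_pos:
  assumes "0 < x" "0 < y" "x \<noteq> y" "0 \<le> w"
  shows "Hf x y w > 0"
proof (cases "(x - w) * (y - w) \<ge> 0")
  case True
  have a: "chi x - chi w - chi1 w * (x - w) \<ge> 0" using bregman0[of w x] assms by simp
  have b: "chi y - chi w - chi1 w * (y - w) \<ge> 0" using bregman0[of w y] assms by simp
  have c: "chi2 w / 2 * ((x - w) * (y - w)) \<ge> 0" using True chi2_nonneg[of w] assms by simp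
  have "chi x - chi w - chi1 w * (x - w) > 0 \<or> chi y - chi w - chi1 w * (y - w) > 0"
    using bregman[of w x] bregman[of w y] assms by (cases "x = w") auto
  then show ?thesis unfolding Hf_split using a b c by linarith
next
  case False
  then have "(x - w) * (y - w) < 0" by simp
  then have "(x < w \<and> w < y) \<or> (y < w \<and> w < x)"
    by (auto simp: mult_less_0_iff)
  then show ?thesis
  proof
    assume "x < w \<and> w < y" then show ?thesis using H_pos_mid assms by simp
  next
    assume "y < w \<and> w < x" then show ?thesis using H_pos_mid[of y w x] assms Hf_sym by simp
  qed
qed



lemma l_rep:
  assumes "0 < l" "l \<le> pi"
  shows "\<exists>w\<ge>0. l = pi - 2 * arctan w \<and> (l < pi \<longrightarrow> 0 < w)"
proof -
  define w where "w = tan ((pi - l) / 2)"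
  have a1: "0 \<le> (pi - l) / 2" "(pi - l) / 2 < pi / 2" using assms by auto
  have "arctan w = (pi - l) / 2" unfolding w_def using a1 by (intro arctan_tan) auto
  moreover have "0 \<le> w" unfolding w_def using a1 by (rule tan_pos_pi2_le)
  moreover have "l < pi \<longrightarrow> 0 < w" unfolding w_def using a1 by (auto intro: tan_gt_zero)
  ultimately show ?thesis by (intro exI[of _ w]) auto
qed

lemma G_zero: "G 0 x y = 0" unfolding G_def S1_def S2_def by simp

lemma G_cont: "continuous_on A (\<lambda>l. G l x y)"
  unfolding G_def S1_def S2_def by (intro continuous_intros) simp_all

lemma lstar_eq:
  assumes "c > 0" shows "2 * arctan c = pi - 2 * arctan (1 / c)"
proof -
  have "arctan (1 / c) = pi / 2 - arctan c" using arctan_inverse[of c] assms by (simp add: inverse_eq_divide)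
  then show ?thesis by simp
qed

lemma part1:
  assumes x: "x > 0" and l: "0 \<le> l" "l < pi" "l \<noteq> pi - 2 * arctan x"
  shows "G l x x < G (pi - 2 * arctan x) x x"
proof -
  have top: "G (pi - 2 * arctan x) x x = 4/9 * chi x" using G_Q[of x x x] Q_diag by simp
  show ?thesis
  proof (cases "l = 0")
    case True
    then show ?thesis using top G_zero chi_pos[of x] x by simp
  next
    case False
    then obtain w where w: "w \<ge> 0" "l = pi - 2 * arctan w" "0 < w" using l_rep[of l] l by auto
    have "w \<noteq> x" using w l by auto
    then have "Q w x x < chi x" using part1_ineq[of x w] x w by simp
    then show ?thesis using top w G_Q[of w x x] by simp
  qed
qed

lemma part1_le:
  assumes x: "x > 0" and l: "0 \<le> l" "l < pi"
  shows "G l x x \<le> G (pi - 2 * arctan x) x x"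
  using part1[OF x l] by (cases "l = pi - 2 * arctan x") auto

lemma part2:
  assumes "x > 0" "y > 0" "x \<noteq> y" "0 \<le> l" "l \<le> pi"
  shows "G l x y < 4/9 * ((chi x + chi y) / 2)"
proof (cases "l = 0")
  case True
  then show ?thesis using G_zero chi_pos[of x] chi_pos[of y] assms by simp
next
  case False
  then obtain w where w: "w \<ge> 0" "l = pi - 2 * arctan w" using l_rep[of l] assms by auto
  have "Hf x y w > 0" using Hf_pos[of x y w] assms w by simp
  then show ?thesis using w G_Q[of w x y] unfolding Hf_def by simp
qed

theorem lemma4:
  fixes r :: real
  assumes "0 < r" and "r < pi / 2"
  shows "(\<forall>a\<in>{0..<pi/2}.
            2 * arctan (tan r * cos a) \<in> {0..<pi} \<and>
            (\<forall>l\<in>{0..<pi}. l \<noteq> 2 * arctan (tan r * cos a) \<longrightarrow>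
                g r l a a < g r (2 * arctan (tan r * cos a)) a a))
       \<and> (\<forall>a\<in>{0..<pi/2}. \<forall>b\<in>{0..<pi/2}.
            f r a b \<le> (f r a a + f r b b) / 2 \<and>
            (f r a b = (f r a a + f r b b) / 2 \<longrightarrow> a = b))"
proof -
  define T where "T = tan r"
  have Tp: "T > 0" unfolding T_def using assms by (simp add: tan_gt_zero)
  have cpos: "cos a > 0" if "a \<in> {0..<pi/2}" for a using that by (intro cos_gt_zero_pi) auto
  define X where "X a = 1 / (T * cos a)" for a
  have Xp: "X a > 0" if "a \<in> {0..<pi/2}" for a unfolding X_def using cpos[OF that] Tp by simp
  have lst: "2 * arctan (T * cos a) = pi - 2 * arctan (X a)" if "a \<in> {0..<pi/2}" for a
    unfolding X_def using lstar_eq[of "T * cos a"] cpos[OF that] Tp by simp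
  have gG: "g r l a b = G l (X a) (X b)" if "0 \<le> l" "a \<in> {0..<pi/2}" "b \<in> {0..<pi/2}" for l a b
    unfolding X_def T_def using g_eq[of l r a b] that cpos Tp T_def by simp
  have top: "g r (2 * arctan (T * cos a)) a a = 4/9 * chi (X a)" if a: "a \<in> {0..<pi/2}" for a
  proof -
    have "0 \<le> 2 * arctan (T * cos a)" using cpos[OF a] Tp by simp
    then show ?thesis using gG[of _ a a] a lst[OF a] G_Q[of "X a" "X a" "X a"] Q_diag by simp
  qed
  have lin: "2 * arctan (T * cos a) \<in> {0..<pi}" if a: "a \<in> {0..<pi/2}" for a
    using cpos[OF a] Tp arctan_ubound[of "T * cos a"] by simp
  have P1: "g r l a a < g r (2 * arctan (T * cos a)) a a"
    if a: "a \<in> {0..<pi/2}" and l: "l \<in> {0..<pi}" "l \<noteq> 2 * arctan (T * cos a)" for a l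
  proof -
    have "G l (X a) (X a) < G (pi - 2 * arctan (X a)) (X a) (X a)"
      using part1[of "X a" l] Xp[OF a] l lst[OF a] by simp
    moreover have "0 \<le> 2 * arctan (T * cos a)" using lin[OF a] by simp
    ultimately show ?thesis using gG[of l a a] gG[of "2 * arctan (T * cos a)" a a] a l lst[OF a] by simp
  qed
  have fdiag: "f r a a = 4/9 * chi (X a)" if a: "a \<in> {0..<pi/2}" for a
  proof -
    have "Sup ((\<lambda>l. g r l a a) ` {0..<pi}) = g r (2 * arctan (T * cos a)) a a"
    proof (rule cSup_eq_maximum)
      show "g r (2 * arctan (T * cos a)) a a \<in> (\<lambda>l. g r l a a) ` {0..<pi}" using lin[OF a] by blast
    next
      fix z assume "z \<in> (\<lambda>l. g r l a a) ` {0..<pi}"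
      then obtain l where l: "l \<in> {0..<pi}" "z = g r l a a" by blast
      show "z \<le> g r (2 * arctan (T * cos a)) a a"
        using P1[OF a l(1)] l by (cases "l = 2 * arctan (T * cos a)") auto
    qed
    then show ?thesis unfolding f_def using top[OF a] by simp
  qed
  have P2: "f r a b < (f r a a + f r b b) / 2"
    if a: "a \<in> {0..<pi/2}" and b: "b \<in> {0..<pi/2}" and ab: "a \<noteq> b" for a b
  proof -
    have "cos a \<noteq> cos b" using a b ab cos_inj_pi[of a b] by auto
    then have xy: "X a \<noteq> X b" unfolding X_def using Tp cpos[OF a] cpos[OF b] by (auto simp: field_simps)
    obtain l0 where l0: "l0 \<in> {0..pi}" "\<forall>l\<in>{0..pi}. G l (X a) (X b) \<le> G l0 (X a) (X b)"
      using continuous_attains_sup[OF compact_Icc _ G_cont, of 0 pi "X a" "X b"] by auto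
    have lt: "G l0 (X a) (X b) < 4/9 * ((chi (X a) + chi (X b)) / 2)"
      using part2[of "X a" "X b" l0] Xp[OF a] Xp[OF b] xy l0(1) by simp
    have "f r a b \<le> G l0 (X a) (X b)"
      unfolding f_def
    proof (rule cSUP_least)
      show "{0..<pi} \<noteq> {}" using pi_gt_zero by auto
    next
      fix l assume "l \<in> {0..<pi}"
      then show "g r l a b \<le> G l0 (X a) (X b)" using gG[of l a b] a b l0(2) by auto
    qed
    then show ?thesis using lt fdiag[OF a] fdiag[OF b] by simp
  qed
  show ?thesis
  proof (intro conjI ballI impI)
    fix a assume a: "a \<in> {0..<pi/2}"
    show "2 * arctan (tan r * cos a) \<in> {0..<pi}" using lin[OF a] unfolding T_def .
    fix l assume "l \<in> {0..<pi}" "l \<noteq> 2 * arctan (tan r * cos a)"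
    then show "g r l a a < g r (2 * arctan (tan r * cos a)) a a" using P1[OF a] unfolding T_def by simp
  next
    fix a b assume a: "a \<in> {0..<pi/2}" and b: "b \<in> {0..<pi/2}"
    show "f r a b \<le> (f r a a + f r b b) / 2"
      using P2[OF a b] by (cases "a = b") auto
  next
    fix a b assume a: "a \<in> {0..<pi/2}" and b: "b \<in> {0..<pi/2}"
      and "f r a b = (f r a a + f r b b) / 2"
    then show "a = b" using P2[OF a b] by (cases "a = b") auto
  qed
qed


end
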